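(* For every integer $n>1$, the map $\Phi$ is a bijection between well-labelled Motzkin paths of size $n$ and labelled binary trees with $n$ leaves.
   Context: A well-labelled path of size $n$ is a pair $(\mathbf{p},\sigma)$ with $\mathbf{p}=p_1\ldots p_{n-1}$ a word on $\{-1,0,+1\}$ and $\sigma$ a permutation of $[n]$ such that $p_i=-1\Rightarrow\sigma_i<\sigma_{i+1}$ and $p_i=1\Rightarrow\sigma_i>\sigma_{i+1}$; it is Motzkin if $\sum_{i=1}^jp_i\ge0$ for $j=1,\ldots,n-2$ and $\sum_{i=1}^{n-1}p_i=-1$. A labelled binary tree of size $n$ is a rooted tree with $n$ leaves carrying distinct labels in $[n]$, each unlabelled internal vertex having exactly two unordered children. For a set $I$ of $m$ integers, $\lambda_I$ is the order-preserving bijection $[m]\to I$; for a bijection $\lambda$ and a tree $\tau$, $\lambda(\tau)$ replaces each leaf label $i$ by $\lambda(i)$. The map $\Phi$ is defined recursively on a Motzkin path $(\mathbf{p},\sigma)$ of size $n\ge2$: (i) if $n=2$ (so $\mathbf{p}=(-1)$, $\sigma=12$), $\Phi(\mathbf{p},\sigma)$ is the tree with a root and two leaves labelled $1,2$. (ii) If $n>2$ and $p_1=0$, let $\mathbf{p}'=p_2\ldots p_{n-1}$ and $\sigma'_i=\lambda^{-1}_{[n]\setminus\{\sigma_1\}}(\sigma_{i+1})$ for $i=1,\ldots,n-1$; then $\Phi(\mathbf{p},\sigma)$ is the tree consisting of a root whose two subtrees are a leaf labelled $\sigma_1$ and $\lambda_{[n]\setminus\{\sigma_1\}}(\Phi(\mathbf{p}',\sigma'))$.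 (iii) If $n>2$ and $p_1=1$, let $k$ be the least integer with $\sum_{i=1}^kp_i=0$, let $I'=\{\sigma_1,\ldots,\sigma_k\}$, $I''=\{\sigma_{k+1},\ldots,\sigma_n\}$, $p'_i=-p_{k-i}$ ($1\le i\le k-1$), $p''_i=p_{k+i}$ ($1\le i\le n-k-1$), $\sigma'_i=\lambda^{-1}_{I'}(\sigma_{k+1-i})$ ($1\le i\le k$), $\sigma''_i=\lambda^{-1}_{I''}(\sigma_{k+i})$ ($1\le i\le n-k$); then $\Phi(\mathbf{p},\sigma)$ is the tree consisting of a root whose two subtrees are $\lambda_{I'}(\Phi(\mathbf{p}',\sigma'))$ and $\lambda_{I''}(\Phi(\mathbf{p}'',\sigma''))$. *)

theory Defs
  imports Main
begin

text \<open>Plane binary trees with natural-number leaf labels; unordered trees are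
  obtained by quotienting by the equivalence that allows swapping children.\<close>

datatype ltree = Leaf nat | Node ltree ltree

fun leaves :: "ltree \<Rightarrow> nat list" where
  "leaves (Leaf a) = [a]"
| "leaves (Node l r) = leaves l @ leaves r"

fun relabel :: "(nat \<Rightarrow> nat) \<Rightarrow> ltree \<Rightarrow> ltree" where
  "relabel f (Leaf a) = Leaf (f a)"
| "relabel f (Node l r) = Node (relabel f l) (relabel f r)"

inductive teq :: "ltree \<Rightarrow> ltree \<Rightarrow> bool" where
  teq_leaf: "teq (Leaf a) (Leaf a)"
| teq_same: "teq a c \<Longrightarrow> teq b d \<Longrightarrow> teq (Node a b) (Node c d)"
| teq_swap: "teq a d \<Longrightarrow> teq b c \<Longrightarrow> teq (Node a b) (Node c d)"

definition teq_rel :: "(ltree \<times> ltree) set" where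
  "teq_rel = {(s, t). teq s t}"

definition labelled_trees :: "nat \<Rightarrow> ltree set" where
  "labelled_trees n = {t. distinct (leaves t) \<and> set (leaves t) = {1..n}}"

text \<open>A path p_1..p_{n-1} is an int list (p_i = p ! (i-1)); a permutation
  sigma of [n] is a list sigma_1..sigma_n (sigma_i = sigma ! (i-1)).\<close>
definition well_labelled :: "nat \<Rightarrow> int list \<Rightarrow> nat list \<Rightarrow> bool" where
  "well_labelled n p \<sigma> \<longleftrightarrow>
     length p = n - 1 \<and> set p \<subseteq> {-1, 0, 1} \<and>
     distinct \<sigma> \<and> set \<sigma> = {1..n} \<and>
     (\<forall>i < n - 1. (p ! i = -1 \<longrightarrow> \<sigma> ! i < \<sigma> ! (i+1)) \<and>
                  (p ! i = 1 \<longrightarrow> \<sigma> ! i > \<sigma> ! (i+1)))"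

definition motzkin :: "nat \<Rightarrow> int list \<Rightarrow> nat list \<Rightarrow> bool" where
  "motzkin n p \<sigma> \<longleftrightarrow> well_labelled n p \<sigma> \<and>
     (\<forall>j \<in> {1..n-2}. sum_list (take j p) \<ge> 0) \<and> sum_list p = -1"

definition motzkin_paths :: "nat \<Rightarrow> (int list \<times> nat list) set" where
  "motzkin_paths n = {(p, \<sigma>). motzkin n p \<sigma>}"

text \<open>lambda_I: the order-preserving bijection [m] -> I, and its inverse.\<close>
definition lam :: "nat set \<Rightarrow> nat \<Rightarrow> nat" where
  "lam I i = sorted_list_of_set I ! (i - 1)"

definition lam_inv :: "nat set \<Rightarrow> nat \<Rightarrow> nat" where
  "lam_inv I x = card {y \<in> I. y \<le> x}"

text \<open>Recursive definition with a fuel argument (the first argument); Phi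
  applies it with fuel = size, which always suffices since subcalls are on
  strictly smaller sizes.\<close>
fun phi :: "nat \<Rightarrow> int list \<Rightarrow> nat list \<Rightarrow> ltree" where
  "phi 0 p \<sigma> = Leaf 0"
| "phi (Suc f) p \<sigma> =
    (let n = length \<sigma> in
     if n \<le> 2 then Node (Leaf (\<sigma> ! 0)) (Leaf (\<sigma> ! 1))
     else if p ! 0 = 0 then
       (let J = {1..n} - {\<sigma> ! 0};
            p' = tl p;
            \<sigma>' = map (lam_inv J) (tl \<sigma>)
        in Node (Leaf (\<sigma> ! 0)) (relabel (lam J) (phi f p' \<sigma>')))
     else
       (let k = (LEAST k. k \<ge> 1 \<and> sum_list (take k p) = 0);
            I1 = set (take k \<sigma>);
            I2 = set (drop k \<sigma>);
            p1 = map uminus (rev (take (k - 1) p));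
            p2 = drop k p;
            \<sigma>1 = map (lam_inv I1) (rev (take k \<sigma>));
            \<sigma>2 = map (lam_inv I2) (drop k \<sigma>)
        in Node (relabel (lam I1) (phi f p1 \<sigma>1)) (relabel (lam I2) (phi f p2 \<sigma>2))))"

definition Phi :: "int list \<times> nat list \<Rightarrow> ltree" where
  "Phi w = phi (length (snd w)) (fst w) (snd w)"

end

theory Submission
  imports Defs "HOL-Library.Multiset"
begin

lemma lam_inv_mono:
  assumes "finite A" "x \<in> A" "y \<in> A" "x < y"
  shows "lam_inv A x < lam_inv A y"
proof -
  have "y \<in> {z\<in>A. z \<le> y}" "y \<notin> {z\<in>A. z \<le> x}" using assms by auto
  moreover have "{z\<in>A. z \<le> x} \<subseteq> {z\<in>A. z \<le> y}" using assms by auto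
  ultimately have "{z\<in>A. z \<le> x} \<subset> {z\<in>A. z \<le> y}" by blast
  then show ?thesis unfolding lam_inv_def using assms(1) by (intro psubset_card_mono) auto
qed

lemma lam_inv_range:
  assumes "finite A" "x \<in> A"
  shows "lam_inv A x \<in> {1..card A}"
proof -
  have "x \<in> {z\<in>A. z \<le> x}" using assms by auto
  then have "card {z\<in>A. z \<le> x} \<ge> 1" using assms(1)
    by (metis (no_types, lifting) One_nat_def Suc_leI card_gt_0_iff empty_iff finite_subset mem_Collect_eq subsetI)
  moreover have "card {z\<in>A. z \<le> x} \<le> card A" using assms(1) by (intro card_mono) auto
  ultimately show ?thesis unfolding lam_inv_def by auto
qed

lemma lam_inv_image:
  assumes "finite A"
  shows "lam_inv A ` A = {1..card A}"
proof -
  have inj: "inj_on (lam_inv A) A"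
    by (metis assms inj_onI lam_inv_mono less_irrefl linorder_neqE_nat)
  have "lam_inv A ` A \<subseteq> {1..card A}" using lam_inv_range assms by auto
  moreover have "card (lam_inv A ` A) = card {1..card A}" using card_image[OF inj] by simp
  ultimately show ?thesis by (intro card_subset_eq) auto
qed

lemma lam_lam_inv:
  assumes "finite A" "x \<in> A"
  shows "lam A (lam_inv A x) = x"
proof -
  define L where "L = sorted_list_of_set A"
  have sL: "sorted_wrt (<) L" "set L = A" using assms(1) by (auto simp: L_def)
  obtain i where i: "i < length L" "x = L ! i" using assms sL(2) by (metis in_set_conv_nth)
  have "{z\<in>A. z \<le> x} = set (take (Suc i) L)"
  proof safe
    fix z assume "z \<in> A" "z \<le> x"
    then obtain j where j: "j < length L" "z = L ! j" using sL(2) by (metis in_set_conv_nth)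
    have "j \<le> i"
    proof (rule ccontr)
      assume "\<not> j \<le> i" then have "L ! i < L ! j" using sL(1) j i by (simp add: sorted_wrt_iff_nth_less)
      then show False using \<open>z \<le> x\<close> i j by simp
    qed
    then show "z \<in> set (take (Suc i) L)" using j by (auto simp: in_set_conv_nth)
  next
    fix z assume "z \<in> set (take (Suc i) L)"
    then obtain j where "j < length (take (Suc i) L)" "z = take (Suc i) L ! j" by (metis in_set_conv_nth)
    then have j: "j \<le> i" "z = L ! j" using i by auto
    then show "z \<in> A" using i sL by auto
    show "z \<le> x" using j i sL(1) by (metis le_eq_less_or_eq sorted_wrt_iff_nth_less)
  qed
  moreover have "distinct L" using sL(1) strict_sorted_iff by blast
  ultimately have "lam_inv A x = Suc i" unfolding lam_inv_def using i
    by (simp add: distinct_card min_def)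
  then show ?thesis unfolding lam_def L_def[symmetric] using i by simp
qed

lemma teq_refl: "teq t t"
  by (induction t) (auto intro: teq.intros)

lemma teq_sym: "teq s t \<Longrightarrow> teq t s"
  by (induction rule: teq.induct) (auto intro: teq.intros)

lemma teq_Leaf_iff: "teq (Leaf a) t \<longleftrightarrow> t = Leaf a"
  by (auto elim: teq.cases intro: teq.intros)

lemma teq_Node_iff: "teq (Node a b) t \<longleftrightarrow>
   (\<exists>c d. t = Node c d \<and> ((teq a c \<and> teq b d) \<or> (teq a d \<and> teq b c)))"
  by (auto elim: teq.cases intro: teq.intros)

lemma teq_trans: "teq s t \<Longrightarrow> teq t u \<Longrightarrow> teq s u"
proof (induction arbitrary: u rule: teq.induct)
  case (teq_leaf a) then show ?case by simp
next
  case (teq_same a c b d)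
  then show ?case by (auto simp: teq_Node_iff)
next
  case (teq_swap a d b c)
  then show ?case by (auto simp: teq_Node_iff)
qed

lemma teq_mset: "teq s t \<Longrightarrow> mset (leaves s) = mset (leaves t)"
  by (induction rule: teq.induct) (auto simp: add.commute)

lemma equiv_teq: "equiv UNIV teq_rel"
  unfolding equiv_def refl_on_def sym_def trans_def teq_rel_def
  using teq_refl teq_sym teq_trans by blast

lemma leaves_Node_len: "length (leaves (Node a b)) \<ge> 2"
proof -
  have "\<And>t. leaves t \<noteq> []" by (induct_tac t) auto
  then have h: "\<And>t. length (leaves t) \<ge> 1" by (metis One_nat_def Suc_leI length_greater_0_conv)
  show ?thesis using add_mono[OF h[of a] h[of b]] by simp
qed

definition mot :: "int list \<Rightarrow> nat list \<Rightarrow> bool" where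
 "mot p \<sigma> \<longleftrightarrow> length \<sigma> \<ge> 2 \<and> length p = length \<sigma> - 1 \<and> set p \<subseteq> {-1,0,1} \<and> distinct \<sigma> \<and>
   (\<forall>i < length p. (p!i = -1 \<longrightarrow> \<sigma>!i < \<sigma>!(Suc i)) \<and> (p!i = 1 \<longrightarrow> \<sigma>!(Suc i) < \<sigma>!i)) \<and>
   (\<forall>j. 1 \<le> j \<and> j < length p \<longrightarrow> 0 \<le> sum_list (take j p)) \<and> sum_list p = -1"

function psi :: "int list \<Rightarrow> nat list \<Rightarrow> ltree" where
  "psi p \<sigma> = (if length \<sigma> \<le> 2 then Node (Leaf (\<sigma> ! 0)) (Leaf (\<sigma> ! 1))
     else if p ! 0 = 0 then Node (Leaf (\<sigma> ! 0)) (psi (tl p) (tl \<sigma>))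
     else (let k = (LEAST k. k \<ge> 1 \<and> sum_list (take k p) = 0) in
       if 0 < k \<and> k < length \<sigma> then
         Node (psi (map uminus (rev (take (k - 1) p))) (rev (take k \<sigma>))) (psi (drop k p) (drop k \<sigma>))
       else Leaf 0))"
  by pat_completeness auto
termination by (relation "measure (\<lambda>(p,\<sigma>). length \<sigma>)") auto

declare psi.simps[simp del]

lemma psi_base: "length \<sigma> \<le> 2 \<Longrightarrow> psi p \<sigma> = Node (Leaf (\<sigma> ! 0)) (Leaf (\<sigma> ! 1))"
  by (subst psi.simps) simp

lemma psi_zero: "length \<sigma> > 2 \<Longrightarrow> p ! 0 = 0 \<Longrightarrow> psi p \<sigma> = Node (Leaf (\<sigma> ! 0)) (psi (tl p) (tl \<sigma>))"
  by (subst psi.simps) simp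

lemma psi_split: "length \<sigma> > 2 \<Longrightarrow> p ! 0 \<noteq> 0 \<Longrightarrow> k = (LEAST k. k \<ge> 1 \<and> sum_list (take k p) = 0) \<Longrightarrow>
   0 < k \<Longrightarrow> k < length \<sigma> \<Longrightarrow>
   psi p \<sigma> = Node (psi (map uminus (rev (take (k - 1) p))) (rev (take k \<sigma>))) (psi (drop k p) (drop k \<sigma>))"
  by (subst psi.simps) (simp add: Let_def)

lemma discrete_ivt:
  fixes s :: "nat \<Rightarrow> int"
  assumes "\<And>j. a \<le> j \<Longrightarrow> j < b \<Longrightarrow> \<bar>s (Suc j) - s j\<bar> \<le> 1" "s a \<ge> 0" "s b \<le> 0" "a \<le> b"
  shows "\<exists>j. a \<le> j \<and> j \<le> b \<and> s j = 0"
  using assms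
proof (induction b)
  case 0 then show ?case by auto
next
  case (Suc b)
  show ?case
  proof (cases "a \<le> b \<and> s b \<le> 0")
    case True
    then show ?thesis using Suc.IH Suc.prems by force
  next
    case False
    then show ?thesis
    proof (cases "a = Suc b")
      case True then show ?thesis using Suc.prems by auto
    next
      case False
      then have "s b > 0" "a \<le> b" using \<open>\<not> (a \<le> b \<and> s b \<le> 0)\<close> Suc.prems by auto
      moreover have "\<bar>s (Suc b) - s b\<bar> \<le> 1" using Suc.prems \<open>a \<le> b\<close> by auto
      ultimately have "s (Suc b) = 0" using Suc.prems by auto
      then show ?thesis using \<open>a \<le> b\<close> le_SucI by blast
    qed
  qed
qed

lemma sum_take_step:
  assumes "set p \<subseteq> {-1,0,1::int}" "j < length p"
  shows "\<bar>sum_list (take (Suc j) p) - sum_list (take j p)\<bar> \<le> 1"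
proof -
  have "sum_list (take (Suc j) p) = sum_list (take j p) + p ! j" using assms(2) by (simp add: take_Suc_conv_app_nth)
  moreover have "p ! j \<in> {-1,0,1}" using assms nth_mem by blast
  ultimately show ?thesis by auto
qed

lemma sum_uminus: "sum_list (map uminus xs) = - sum_list (xs::int list)"
  by (induction xs) auto

lemma sum_take_drop: "sum_list (take j (drop k p)) = sum_list (take (k+j) p) - sum_list (take k (p::int list))"
  by (simp add: take_add)

lemma sum_take_rev: "j \<le> length xs \<Longrightarrow>
  sum_list (take j (rev xs)) = sum_list xs - sum_list (take (length xs - j) (xs::int list))"
proof -
  assume "j \<le> length xs"
  have "sum_list xs = sum_list (take (length xs - j) xs) + sum_list (drop (length xs - j) xs)"
    by (metis append_take_drop_id sum_list_append)
  then show ?thesis by (simp add: take_rev)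
qed

lemma mot_zero:
  assumes "mot p \<sigma>" "length \<sigma> > 2" "p ! 0 = 0"
  shows "mot (tl p) (tl \<sigma>)"
proof -
  have "p \<noteq> []" using assms unfolding mot_def by auto
  then obtain q where p: "p = 0 # q" using assms(3) by (cases p) auto
  obtain a \<tau> where s: "\<sigma> = a # \<tau>" using assms by (cases \<sigma>) auto
  have "\<forall>j. 1 \<le> j \<and> j < length q \<longrightarrow> 0 \<le> sum_list (take j q)"
  proof (intro allI impI)
    fix j assume "1 \<le> j \<and> j < length q"
    then have "0 \<le> sum_list (take (Suc j) p)" using assms(1) p unfolding mot_def by auto
    then show "0 \<le> sum_list (take j q)" using p by simp
  qed
  moreover have "\<forall>i < length q. (q!i = -1 \<longrightarrow> \<tau>!i < \<tau>!(Suc i)) \<and> (q!i = 1 \<longrightarrow> \<tau>!(Suc i) < \<tau>!i)"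
  proof (intro allI impI)
    fix i assume "i < length q"
    then have "Suc i < length p" using p by simp
    then show "(q!i = -1 \<longrightarrow> \<tau>!i < \<tau>!(Suc i)) \<and> (q!i = 1 \<longrightarrow> \<tau>!(Suc i) < \<tau>!i)"
      using assms(1) p s unfolding mot_def by (metis nth_Cons_Suc)
  qed
  ultimately show ?thesis using assms p s unfolding mot_def by auto
qed

lemma mot_split:
  assumes m: "mot p \<sigma>" and n: "length \<sigma> > 2" and p0: "p ! 0 \<noteq> 0"
    and k: "k = (LEAST k. k \<ge> 1 \<and> sum_list (take k p) = 0)"
  shows "p ! 0 = 1" "2 \<le> k" "k + 2 \<le> length \<sigma>" "p ! (k - 1) = -1" "sum_list (take k p) = 0"
    "\<And>j. 1 \<le> j \<Longrightarrow> j < k \<Longrightarrow> sum_list (take j p) \<ge> 1"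
    "mot (map uminus (rev (take (k - 1) p))) (rev (take k \<sigma>))"
    "mot (drop k p) (drop k \<sigma>)"
proof -
  define s where "s j = sum_list (take j p)" for j
  have lp: "length p = length \<sigma> - 1" and sp: "set p \<subseteq> {-1,0,1}" and ds: "distinct \<sigma>"
    and lab: "\<And>i. i < length p \<Longrightarrow> (p!i = -1 \<longrightarrow> \<sigma>!i < \<sigma>!(Suc i)) \<and> (p!i = 1 \<longrightarrow> \<sigma>!(Suc i) < \<sigma>!i)"
    and ps: "\<And>j. 1 \<le> j \<Longrightarrow> j < length p \<Longrightarrow> 0 \<le> s j" and tot: "s (length p) = -1"
    using m unfolding mot_def s_def by auto
  have step: "\<And>j. j < length p \<Longrightarrow> s (Suc j) = s j + p ! j"
    unfolding s_def by (simp add: take_Suc_conv_app_nth)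
  have pin: "\<And>j. j < length p \<Longrightarrow> p ! j \<in> {-1,0,1}" using sp nth_mem by blast
  have stepb: "\<And>j. j < length p \<Longrightarrow> \<bar>s (Suc j) - s j\<bar> \<le> 1" using step pin by fastforce
  have s0: "s 0 = 0" by (simp add: s_def)
  have "s 1 = p ! 0" using step[of 0] lp n s0 by simp
  moreover have "s 1 \<ge> 0" using ps[of 1] lp n by simp
  ultimately show p01: "p ! 0 = 1" using pin[of 0] p0 lp n by auto
  have s1: "s 1 = 1" using \<open>s 1 = p ! 0\<close> p01 by simp
  have ivt: "\<And>a b. a \<le> b \<Longrightarrow> b \<le> length p \<Longrightarrow> s a \<ge> 0 \<Longrightarrow> s b \<le> 0 \<Longrightarrow> \<exists>j. a \<le> j \<and> j \<le> b \<and> s j = 0"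
  proof -
    fix a b assume ab: "a \<le> b" "b \<le> length p" "s a \<ge> 0" "s b \<le> 0"
    have "\<And>j. a \<le> j \<Longrightarrow> j < b \<Longrightarrow> \<bar>s (Suc j) - s j\<bar> \<le> 1" using stepb ab(2) by simp
    then show "\<exists>j. a \<le> j \<and> j \<le> b \<and> s j = 0" using discrete_ivt[of a b s] ab by blast
  qed
  have "\<exists>j. 1 \<le> j \<and> j \<le> length p \<and> s j = 0" by (rule ivt) (use s1 tot lp n in auto)
  then obtain j0 where j0: "1 \<le> j0" "j0 \<le> length p" "s j0 = 0" by blast
  have kdef: "k = (LEAST k. k \<ge> 1 \<and> s k = 0)" using k unfolding s_def by simp
  have kk: "k \<ge> 1 \<and> s k = 0" unfolding kdef by (rule LeastI[of _ j0]) (use j0 in auto)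
  have kle: "k \<le> j0" unfolding kdef by (rule Least_le) (use j0 in auto)
  show sk: "sum_list (take k p) = 0" using kk s_def by simp
  have pos: "\<And>j. 1 \<le> j \<Longrightarrow> j < k \<Longrightarrow> s j \<ge> 1"
  proof (rule ccontr)
    fix j assume j: "1 \<le> j" "j < k" "\<not> s j \<ge> 1"
    then have "s j \<le> 0" by simp
    then obtain j' where "1 \<le> j'" "j' \<le> j" "s j' = 0" using ivt[of 1 j] j s1 kle j0 by auto
    moreover have "j' < k" using \<open>j' \<le> j\<close> j by simp
    ultimately show False using not_less_Least[of j' "\<lambda>k. k \<ge> 1 \<and> s k = 0"] kdef by auto
  qed
  then show "\<And>j. 1 \<le> j \<Longrightarrow> j < k \<Longrightarrow> sum_list (take j p) \<ge> 1" unfolding s_def by simp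
  show k2: "2 \<le> k" using kk s1 by (cases "k = 1") auto
  have "k \<noteq> length p" using kk tot by auto
  then have klt: "k < length p" using kle j0 by simp
  then show kn: "k + 2 \<le> length \<sigma>" using lp by simp
  have "s k = s (k - 1) + p ! (k - 1)" using step[of "k-1"] k2 klt by simp
  moreover have "s (k - 1) \<ge> 1" using pos[of "k-1"] k2 by simp
  moreover have "p ! (k - 1) \<in> {-1,0,1}" using pin[of "k-1"] klt by simp
  ultimately have pk: "p ! (k - 1) = -1 \<and> s (k - 1) = 1" using kk by auto
  then show pkm: "p ! (k - 1) = -1" by simp
  have skm: "s (k - 1) = 1" using pk by simp
  have d1: "2 \<le> length (drop k \<sigma>)" using kn by simp
  have d2: "length (drop k p) = length (drop k \<sigma>) - 1" using lp by simp
  have d3: "set (drop k p) \<subseteq> {-1,0,1}" by (meson order_trans set_drop_subset sp)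
  have d4: "distinct (drop k \<sigma>)" using ds by simp
  have d5: "\<forall>i < length (drop k p). (drop k p!i = -1 \<longrightarrow> drop k \<sigma>!i < drop k \<sigma>!(Suc i)) \<and>
             (drop k p!i = 1 \<longrightarrow> drop k \<sigma>!(Suc i) < drop k \<sigma>!i)"
  proof (intro allI impI)
    fix i assume "i < length (drop k p)"
    then have ki: "k + i < length p" by simp
    then have e: "drop k p ! i = p!(k+i)" "drop k \<sigma> ! i = \<sigma>!(k+i)" "drop k \<sigma> ! Suc i = \<sigma>!(Suc (k+i))"
      using lp by simp_all
    show "(drop k p!i = -1 \<longrightarrow> drop k \<sigma>!i < drop k \<sigma>!(Suc i)) \<and>
             (drop k p!i = 1 \<longrightarrow> drop k \<sigma>!(Suc i) < drop k \<sigma>!i)"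
      unfolding e using lab[OF ki] by simp
  qed
  have d6: "\<forall>j. 1 \<le> j \<and> j < length (drop k p) \<longrightarrow> 0 \<le> sum_list (take j (drop k p))"
  proof (intro allI impI)
    fix j assume j: "1 \<le> j \<and> j < length (drop k p)"
    have "sum_list (take j (drop k p)) = s (k+j) - s k" unfolding s_def by (rule sum_take_drop)
    then show "0 \<le> sum_list (take j (drop k p))"
    proof -
      have "k + j < length p" "1 \<le> k + j" using j by auto
      then have "0 \<le> s (k+j)" using ps by blast
      then show ?thesis using \<open>sum_list (take j (drop k p)) = s (k+j) - s k\<close> kk by simp
    qed
  qed
  have "sum_list p = sum_list (take k p) + sum_list (drop k p)" by (metis append_take_drop_id sum_list_append)
  then have d7: "sum_list (drop k p) = -1" using tot kk unfolding s_def by simp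
  show "mot (drop k p) (drop k \<sigma>)" unfolding mot_def by (intro conjI d1 d2 d3 d4 d5 d6 d7)
  define P where "P = map uminus (rev (take (k - 1) p))"
  define S where "S = rev (take k \<sigma>)"
  have lP: "length P = k - 1" using klt unfolding P_def by simp
  have lS: "length S = k" using kn unfolding S_def by simp
  have r1: "2 \<le> length S" using lS k2 by simp
  have r2: "length P = length S - 1" using lP lS by simp
  have r3: "set P \<subseteq> {-1,0,1}" unfolding P_def using sp set_take_subset[of "k-1" p] by auto
  have r4: "distinct S" unfolding S_def using ds by simp
  have r5: "\<forall>i < length P. (P!i = -1 \<longrightarrow> S!i < S!(Suc i)) \<and> (P!i = 1 \<longrightarrow> S!(Suc i) < S!i)"
  proof (intro allI impI)
    fix i assume "i < length P"
    then have i2: "i < k - 1" using lP by simp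
    have e1: "P ! i = - p ! (k - 2 - i)" unfolding P_def
      using i2 klt by (simp add: rev_nth)
    have e2: "S ! i = \<sigma> ! Suc (k - 2 - i)" "S ! Suc i = \<sigma> ! (k - 2 - i)"
      unfolding S_def using i2 kn by (simp_all add: rev_nth Suc_diff_Suc)
    have "k - 2 - i < length p" using klt by simp
    then show "(P!i = -1 \<longrightarrow> S!i < S!(Suc i)) \<and> (P!i = 1 \<longrightarrow> S!(Suc i) < S!i)"
      using lab[of "k-2-i"] unfolding e1 e2 by auto
  qed
  have r6: "\<forall>j. 1 \<le> j \<and> j < length P \<longrightarrow> 0 \<le> sum_list (take j P)"
  proof (intro allI impI)
    fix j assume j: "1 \<le> j \<and> j < length P"
    then have j2: "j < k - 1" using lP by simp
    have "sum_list (take j P) = - sum_list (take j (rev (take (k - 1) p)))"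
      unfolding P_def by (simp add: take_map sum_uminus)
    also have "\<dots> = - (s (k-1) - s (k - 1 - j))"
    proof -
      have "sum_list (take j (rev (take (k-1) p))) = sum_list (take (k-1) p) - sum_list (take (length (take (k-1) p) - j) (take (k-1) p))"
        by (rule sum_take_rev) (use j2 klt in simp)
      moreover have "length (take (k-1) p) = k - 1" using klt by simp
      moreover have "take (k - 1 - j) (take (k-1) p) = take (k - 1 - j) p" by (simp add: min_def)
      ultimately show ?thesis unfolding s_def by simp
    qed
    finally have "sum_list (take j P) = - (s (k-1) - s (k - 1 - j))" .
    moreover have "s (k - 1 - j) \<ge> 1" using pos[of "k-1-j"] j2 by simp
    ultimately show "0 \<le> sum_list (take j P)" using skm by simp
  qed
  have r7: "sum_list P = -1" using skm unfolding s_def P_def by (simp add: sum_uminus)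
  show "mot (map uminus (rev (take (k - 1) p))) (rev (take k \<sigma>))"
    unfolding mot_def P_def[symmetric] S_def[symmetric] by (intro conjI r1 r2 r3 r4 r5 r6 r7)
qed

lemma psi_cases:
  assumes "mot p \<sigma>"
  obtains (base) "length \<sigma> = 2" "psi p \<sigma> = Node (Leaf (\<sigma> ! 0)) (Leaf (\<sigma> ! 1))"
  | (zero) "length \<sigma> > 2" "p ! 0 = 0" "psi p \<sigma> = Node (Leaf (\<sigma> ! 0)) (psi (tl p) (tl \<sigma>))"
      "mot (tl p) (tl \<sigma>)"
  | (split) k where "length \<sigma> > 2" "p ! 0 = 1" "k = (LEAST k. k \<ge> 1 \<and> sum_list (take k p) = 0)" "2 \<le> k" "k + 2 \<le> length \<sigma>" "p ! (k - 1) = -1"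
      "psi p \<sigma> = Node (psi (map uminus (rev (take (k - 1) p))) (rev (take k \<sigma>))) (psi (drop k p) (drop k \<sigma>))"
      "mot (map uminus (rev (take (k - 1) p))) (rev (take k \<sigma>))" "mot (drop k p) (drop k \<sigma>)"
proof -
  have l2: "length \<sigma> \<ge> 2" using assms unfolding mot_def by simp
  show thesis
  proof (cases "length \<sigma> = 2")
    case True then show ?thesis using base psi_base by simp
  next
    case False
    then have n: "length \<sigma> > 2" using l2 by simp
    show ?thesis
    proof (cases "p ! 0 = 0")
      case True then show ?thesis using zero n psi_zero mot_zero assms by simp
    next
      case False
      define k where "k = (LEAST k. k \<ge> 1 \<and> sum_list (take k p) = 0)"
      note sp = mot_split[OF assms n False k_def]
      have "psi p \<sigma> = Node (psi (map uminus (rev (take (k - 1) p))) (rev (take k \<sigma>))) (psi (drop k p) (drop k \<sigma>))"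
        by (rule psi_split[OF n False k_def]) (use sp in auto)
      then show ?thesis using split[of k] sp n k_def by simp
    qed
  qed
qed

lemma psi_mset: "mot p \<sigma> \<Longrightarrow> mset (leaves (psi p \<sigma>)) = mset \<sigma>"
proof (induction "length \<sigma>" arbitrary: p \<sigma> rule: less_induct)
  case less
  from less.prems show ?case
  proof (cases rule: psi_cases)
    case base
    then obtain a b where "\<sigma> = [a, b]"
      by (metis (no_types, lifting) One_nat_def Suc_length_conv length_0_conv numeral_2_eq_2)
    then show ?thesis using base by simp
  next
    case zero
    then have "mset (leaves (psi (tl p) (tl \<sigma>))) = mset (tl \<sigma>)" using less.hyps[of "tl \<sigma>"] by simp
    moreover obtain a t where "\<sigma> = a # t" using zero by (cases \<sigma>) auto
    ultimately show ?thesis using zero by simp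
  next
    case (split k)
    then have "mset (leaves (psi (map uminus (rev (take (k - 1) p))) (rev (take k \<sigma>)))) = mset (rev (take k \<sigma>))"
        "mset (leaves (psi (drop k p) (drop k \<sigma>))) = mset (drop k \<sigma>)"
      using less.hyps by auto
    then have "mset (leaves (psi p \<sigma>)) = mset (take k \<sigma>) + mset (drop k \<sigma>)" using split by simp
    also have "\<dots> = mset \<sigma>" by (metis append_take_drop_id mset_append)
    finally show ?thesis .
  qed
qed

lemma psi_map: "mot p \<sigma> \<Longrightarrow> psi p (map g \<sigma>) = relabel g (psi p \<sigma>)"
proof (induction "length \<sigma>" arbitrary: p \<sigma> rule: less_induct)
  case less
  from less.prems show ?case
  proof (cases rule: psi_cases)
    case base
    then show ?thesis using psi_base[of "map g \<sigma>" p] by simp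
  next
    case zero
    then have "psi (tl p) (map g (tl \<sigma>)) = relabel g (psi (tl p) (tl \<sigma>))" using less.hyps[of "tl \<sigma>"] by simp
    moreover have "psi p (map g \<sigma>) = Node (Leaf (map g \<sigma> ! 0)) (psi (tl p) (tl (map g \<sigma>)))"
      by (rule psi_zero) (use zero in simp_all)
    moreover have "map g \<sigma> ! 0 = g (\<sigma> ! 0)" by (intro nth_map) (use zero(1) in linarith)
    ultimately show ?thesis using zero by (simp add: map_tl)
  next
    case (split k)
    then have "psi (map uminus (rev (take (k - 1) p))) (map g (rev (take k \<sigma>))) = relabel g (psi (map uminus (rev (take (k - 1) p))) (rev (take k \<sigma>)))"
        "psi (drop k p) (map g (drop k \<sigma>)) = relabel g (psi (drop k p) (drop k \<sigma>))"
      using less.hyps by auto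
    moreover have "psi p (map g \<sigma>) = Node (psi (map uminus (rev (take (k - 1) p))) (rev (take k (map g \<sigma>)))) (psi (drop k p) (drop k (map g \<sigma>)))"
      by (rule psi_split) (use split in simp_all)
    ultimately show ?thesis using split by (simp add: rev_map take_map drop_map)
  qed
qed

lemma mot_mono:
  assumes "mot p \<sigma>" "\<And>x y. x \<in> set \<sigma> \<Longrightarrow> y \<in> set \<sigma> \<Longrightarrow> x < y \<Longrightarrow> g x < g y"
  shows "mot p (map g \<sigma>)"
proof -
  have inj: "inj_on g (set \<sigma>)"
    by (metis assms(2) inj_onI less_irrefl linorder_neqE_nat)
  have l: "\<forall>i < length p. (p!i = -1 \<longrightarrow> map g \<sigma>!i < map g \<sigma>!(Suc i)) \<and> (p!i = 1 \<longrightarrow> map g \<sigma>!(Suc i) < map g \<sigma>!i)"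
  proof (intro allI impI)
    fix i assume i: "i < length p"
    then have "Suc i < length \<sigma>" using assms(1) unfolding mot_def by auto
    then have e: "map g \<sigma> ! i = g (\<sigma> ! i)" "map g \<sigma> ! Suc i = g (\<sigma> ! Suc i)" "\<sigma> ! i \<in> set \<sigma>" "\<sigma> ! Suc i \<in> set \<sigma>"
      by auto
    show "(p!i = -1 \<longrightarrow> map g \<sigma>!i < map g \<sigma>!(Suc i)) \<and> (p!i = 1 \<longrightarrow> map g \<sigma>!(Suc i) < map g \<sigma>!i)"
      unfolding e(1,2) using assms(1) i assms(2)[OF e(3,4)] assms(2)[OF e(4,3)] unfolding mot_def by auto
  qed
  show ?thesis using assms(1) inj l unfolding mot_def by (auto simp: distinct_map)
qed

lemma phi_zero: "length \<tau> > 2 \<Longrightarrow> p ! 0 = 0 \<Longrightarrow> phi (Suc f) p \<tau> =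
  Node (Leaf (\<tau>!0)) (relabel (lam ({1..length \<tau>} - {\<tau>!0})) (phi f (tl p) (map (lam_inv ({1..length \<tau>} - {\<tau>!0})) (tl \<tau>))))"
  by (simp add: Let_def)

lemma phi_split: "length \<tau> > 2 \<Longrightarrow> p ! 0 \<noteq> 0 \<Longrightarrow> k = (LEAST k. k \<ge> 1 \<and> sum_list (take k p) = 0) \<Longrightarrow> phi (Suc f) p \<tau> =
  Node (relabel (lam (set (take k \<tau>))) (phi f (map uminus (rev (take (k-1) p))) (map (lam_inv (set (take k \<tau>))) (rev (take k \<tau>)))))
       (relabel (lam (set (drop k \<tau>))) (phi f (drop k p) (map (lam_inv (set (drop k \<tau>))) (drop k \<tau>))))"
  by (simp add: Let_def)

lemma norm_step:
  assumes m: "mot q \<rho>" and A: "A = set \<rho>"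
    and IH: "\<And>p' \<tau>'. mot p' \<tau>' \<Longrightarrow> set \<tau>' = {1..length \<tau>'} \<Longrightarrow> length \<tau>' \<le> f \<Longrightarrow> phi f p' \<tau>' = psi p' \<tau>'"
    and f: "length \<rho> \<le> f"
  shows "relabel (lam A) (phi f q (map (lam_inv A) \<rho>)) = psi q \<rho>"
proof -
  have fin: "finite A" using A by simp
  have m': "mot q (map (lam_inv A) \<rho>)"
    by (rule mot_mono[OF m]) (use lam_inv_mono fin A in auto)
  have "distinct \<rho>" using m unfolding mot_def by simp
  then have "card A = length \<rho>" using A distinct_card by blast
  then have s': "set (map (lam_inv A) \<rho>) = {1..length (map (lam_inv A) \<rho>)}"
    using lam_inv_image[OF fin] A by simp
  have "phi f q (map (lam_inv A) \<rho>) = psi q (map (lam_inv A) \<rho>)"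
    using IH[OF m' s'] f by simp
  then have "relabel (lam A) (phi f q (map (lam_inv A) \<rho>)) = psi q (map (lam A) (map (lam_inv A) \<rho>))"
    using psi_map[OF m'] by simp
  also have "map (lam A) (map (lam_inv A) \<rho>) = \<rho>"
    using lam_lam_inv[OF fin] A by (simp add: map_idI)
  finally show ?thesis .
qed

lemma phi_psi: "mot p \<tau> \<Longrightarrow> set \<tau> = {1..length \<tau>} \<Longrightarrow> length \<tau> \<le> f \<Longrightarrow> phi f p \<tau> = psi p \<tau>"
proof (induction f arbitrary: p \<tau>)
  case 0
  then show ?case unfolding mot_def by simp
next
  case (Suc f)
  from Suc.prems(1) show ?case
  proof (cases rule: psi_cases)
    case base
    then show ?thesis by simp
  next
    case zero
    obtain a t where at: "\<tau> = a # t" using zero by (cases \<tau>) auto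
    have "distinct \<tau>" using Suc.prems unfolding mot_def by simp
    then have J: "{1..length \<tau>} - {\<tau>!0} = set (tl \<tau>)" using Suc.prems(2) at by auto
    have "relabel (lam (set (tl \<tau>))) (phi f (tl p) (map (lam_inv (set (tl \<tau>))) (tl \<tau>))) = psi (tl p) (tl \<tau>)"
      by (rule norm_step[OF zero(4) refl Suc.IH]) (use Suc.prems(3) at in auto)
    then show ?thesis using phi_zero[OF zero(1,2)] zero(3) unfolding J by simp
  next
    case (split k)
    have "relabel (lam (set (take k \<tau>))) (phi f (map uminus (rev (take (k-1) p))) (map (lam_inv (set (take k \<tau>))) (rev (take k \<tau>))))
       = psi (map uminus (rev (take (k-1) p))) (rev (take k \<tau>))"
      by (rule norm_step[OF split(8) _ Suc.IH]) (use Suc.prems(3) split in auto)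
    moreover have "relabel (lam (set (drop k \<tau>))) (phi f (drop k p) (map (lam_inv (set (drop k \<tau>))) (drop k \<tau>)))
       = psi (drop k p) (drop k \<tau>)"
      by (rule norm_step[OF split(9) refl Suc.IH]) (use Suc.prems(3) split in auto)
    ultimately show ?thesis using phi_split[OF split(1) _ split(3), of f] split(2,7) by simp
  qed
qed

lemma motzkin_iff: "n > 1 \<Longrightarrow> motzkin n p \<sigma> \<longleftrightarrow> mot p \<sigma> \<and> set \<sigma> = {1..n}"
proof
  assume n: "n > 1" and m: "motzkin n p \<sigma>"
  then have l: "length \<sigma> = n" unfolding motzkin_def well_labelled_def
    by (metis card_atLeastAtMost diff_Suc_1 distinct_card)
  then show "mot p \<sigma> \<and> set \<sigma> = {1..n}" using m n unfolding motzkin_def well_labelled_def mot_def by auto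
next
  assume n: "n > 1" and m: "mot p \<sigma> \<and> set \<sigma> = {1..n}"
  then have l: "length \<sigma> = n" unfolding mot_def
    by (metis card_atLeastAtMost diff_Suc_1 distinct_card)
  then show "motzkin n p \<sigma>" using m n unfolding motzkin_def well_labelled_def mot_def by auto
qed

lemma Phi_psi: "n > 1 \<Longrightarrow> motzkin n p \<sigma> \<Longrightarrow> Phi (p, \<sigma>) = psi p \<sigma>"
  unfolding Phi_def using motzkin_iff[of n p \<sigma>] phi_psi[of p \<sigma>] 
  by (metis card_atLeastAtMost diff_Suc_1 distinct_card fst_conv mot_def order_refl snd_conv)

lemma psi_Node: "mot p \<sigma> \<Longrightarrow> \<exists>a b. psi p \<sigma> = Node a b"
  by (cases rule: psi_cases) auto

lemma not_teq_Leaf_psi: "mot p \<sigma> \<Longrightarrow> \<not> teq (Leaf a) (psi p \<sigma>)"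
  using psi_Node teq_Leaf_iff by fastforce

lemma not_teq_psi_Leaf: "mot p \<sigma> \<Longrightarrow> \<not> teq (psi p \<sigma>) (Leaf a)"
  using not_teq_Leaf_psi teq_sym by blast

lemma mot_len: "mot p \<sigma> \<Longrightarrow> length \<sigma> \<ge> 2 \<and> length p = length \<sigma> - 1"
  unfolding mot_def by simp

lemma mot_lab: "mot p \<sigma> \<Longrightarrow> i < length p \<Longrightarrow> p ! i = -1 \<Longrightarrow> \<sigma> ! i < \<sigma> ! Suc i"
  unfolding mot_def by simp

lemma teq_len: "teq s t \<Longrightarrow> mot p \<sigma> \<Longrightarrow> mot q \<tau> \<Longrightarrow> s = psi p \<sigma> \<Longrightarrow> t = psi q \<tau> \<Longrightarrow> length \<sigma> = length \<tau>"
  using teq_mset psi_mset mset_eq_length by metis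

lemma rebuild: "k \<ge> 1 \<Longrightarrow> k < length p \<Longrightarrow> p = take (k - 1) p @ [p ! (k - 1)] @ drop k p"
proof -
  assume "k \<ge> 1" "k < length p"
  then have "take (Suc (k - 1)) p = take (k - 1) p @ [p ! (k - 1)]"
    by (intro take_Suc_conv_app_nth) simp
  moreover have "Suc (k - 1) = k" using \<open>k \<ge> 1\<close> by simp
  ultimately have "take k p = take (k - 1) p @ [p ! (k - 1)]" by simp
  then show ?thesis using append_take_drop_id[of k p] by simp
qed

lemma psi_inj: "mot p \<sigma> \<Longrightarrow> mot q \<tau> \<Longrightarrow> teq (psi p \<sigma>) (psi q \<tau>) \<Longrightarrow> p = q \<and> \<sigma> = \<tau>"
proof (induction "length \<sigma>" arbitrary: p \<sigma> q \<tau> rule: less_induct)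
  case less
  have len: "length \<sigma> = length \<tau>" using teq_len[OF less.prems(3,1,2) refl refl] .
  from less.prems(1) show ?case
  proof (cases rule: psi_cases)
    case base1: base
    from less.prems(2) show ?thesis
    proof (cases rule: psi_cases)
      case base
      have lp: "length p = 1" "length q = 1" using less.prems(1,2) base1 base mot_len by auto
      have "sum_list p = -1" "sum_list q = -1" using less.prems(1,2) unfolding mot_def by auto
      moreover obtain x y where "p = [x]" "q = [y]" using lp by (auto simp: length_Suc_conv)
      ultimately have pq: "p = [-1]" "q = [-1]" by auto
      have o1: "\<sigma> ! 0 < \<sigma> ! 1" using mot_lab[OF less.prems(1), of 0] pq by simp
      have o2: "\<tau> ! 0 < \<tau> ! 1" using mot_lab[OF less.prems(2), of 0] pq by simp
      have "\<sigma> ! 0 = \<tau> ! 0 \<and> \<sigma> ! 1 = \<tau> ! 1"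
        using less.prems(3) base1 base o1 o2 by (auto simp: teq_Node_iff teq_Leaf_iff)
      then have "\<sigma> = \<tau>"
      proof (intro nth_equalityI)
        show "length \<sigma> = length \<tau>" by (rule len)
        fix i assume "i < length \<sigma>"
        then have "i = 0 \<or> i = 1" using base1 by auto
        then show "\<sigma> ! i = \<tau> ! i" using \<open>\<sigma> ! 0 = \<tau> ! 0 \<and> \<sigma> ! 1 = \<tau> ! 1\<close> by auto
      qed
      then show ?thesis using pq by simp
    next
      case zero then show ?thesis using len base1 by simp
    next
      case split then show ?thesis using len base1 by simp
    qed
  next
    case zero1: zero
    from less.prems(2) show ?thesis
    proof (cases rule: psi_cases)
      case base then show ?thesis using len zero1 by simp
    next
      case zero
      have "\<sigma> ! 0 = \<tau> ! 0 \<and> teq (psi (tl p) (tl \<sigma>)) (psi (tl q) (tl \<tau>))"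
        using less.prems(3) zero1 zero not_teq_Leaf_psi by (auto simp: teq_Node_iff teq_Leaf_iff)
      then have h: "\<sigma> ! 0 = \<tau> ! 0" "tl p = tl q" "tl \<sigma> = tl \<tau>"
        using less.hyps[of "tl \<sigma>" "tl p" "tl q" "tl \<tau>"] zero1 zero by auto
      have "p \<noteq> []" "q \<noteq> []" "\<sigma> \<noteq> []" "\<tau> \<noteq> []"
        using mot_len[OF less.prems(1)] mot_len[OF less.prems(2)] zero1(1) zero(1) by auto
      then have "p = p ! 0 # tl p" "q = q ! 0 # tl q" "\<sigma> = \<sigma> ! 0 # tl \<sigma>" "\<tau> = \<tau> ! 0 # tl \<tau>"
        by (auto simp: neq_Nil_conv)
      then show ?thesis using h zero1(2) zero(2) by (metis (no_types))
    next
      case (split k)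
      then show ?thesis using less.prems(3) zero1 not_teq_Leaf_psi by (auto simp: teq_Node_iff)
    qed
  next
    case (split k)
    from less.prems(2) show ?thesis
    proof (cases rule: psi_cases)
      case base then show ?thesis using len split by simp
    next
      case zero
      then show ?thesis using less.prems(3) split not_teq_psi_Leaf by (auto simp: teq_Node_iff)
    next
      case split2: (split k')
      let ?A1 = "psi (map uminus (rev (take (k - 1) p))) (rev (take k \<sigma>))"
      let ?B1 = "psi (drop k p) (drop k \<sigma>)"
      let ?A2 = "psi (map uminus (rev (take (k' - 1) q))) (rev (take k' \<tau>))"
      let ?B2 = "psi (drop k' q) (drop k' \<tau>)"
      have lt: "length (rev (take k \<sigma>)) < length \<sigma>" "length (drop k \<sigma>) < length \<sigma>"
        using split by auto
      have "(teq ?A1 ?A2 \<and> teq ?B1 ?B2) \<or> (teq ?A1 ?B2 \<and> teq ?B1 ?A2)"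
        using less.prems(3) split split2 by (auto simp: teq_Node_iff)
      then show ?thesis
      proof
        assume h: "teq ?A1 ?A2 \<and> teq ?B1 ?B2"
        have e1: "map uminus (rev (take (k - 1) p)) = map uminus (rev (take (k' - 1) q))"
          "rev (take k \<sigma>) = rev (take k' \<tau>)"
          using less.hyps[OF lt(1) split(8) split2(8)] h by auto
        have e2: "drop k p = drop k' q" "drop k \<sigma> = drop k' \<tau>"
          using less.hyps[OF lt(2) split(9) split2(9)] h by auto
        have "length (rev (take k \<sigma>)) = k" "length (rev (take k' \<tau>)) = k'" using split split2 by auto
        then have kk: "k = k'" using e1(2) by simp
        have "rev (take (k - 1) p) = rev (take (k - 1) q)"
          using arg_cong[OF e1(1), of "map uminus"] kk by simp
        then have t1: "take (k - 1) p = take (k - 1) q" by simp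
        have lpq: "length p = length \<sigma> - 1" "length q = length \<tau> - 1"
          using mot_len[OF less.prems(1)] mot_len[OF less.prems(2)] by auto
        have "p = take (k - 1) p @ [p ! (k - 1)] @ drop k p" by (rule rebuild) (use split lpq in auto)
        moreover have "q = take (k - 1) q @ [q ! (k - 1)] @ drop k q" by (rule rebuild) (use split lpq len in auto)
        ultimately have "p = q" using t1 e2(1) kk split(6) split2(6) by simp
        moreover have "\<sigma> = \<tau>"
        proof -
          have "take k \<sigma> = take k \<tau>" using e1(2) kk by simp
          moreover have "drop k \<sigma> = drop k \<tau>" using e2(2) kk by simp
          ultimately show ?thesis by (metis append_take_drop_id)
        qed
        ultimately show ?thesis by simp
      next
        assume h: "teq ?A1 ?B2 \<and> teq ?B1 ?A2"
        have e1: "rev (take k \<sigma>) = drop k' \<tau>"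
          using less.hyps[OF lt(1) split(8) split2(9)] h by blast
        have e2: "drop k \<sigma> = rev (take k' \<tau>)"
          using less.hyps[OF lt(2) split(9) split2(8)] h by blast
        have a1: "\<sigma> ! (k - 1) = \<tau> ! k'"
        proof -
          have "rev (take k \<sigma>) ! 0 = \<sigma> ! (k - 1)" using split(4,5) by (simp add: rev_nth)
          moreover have "drop k' \<tau> ! 0 = \<tau> ! k'" using split2(4,5) by simp
          ultimately show ?thesis using e1 by simp
        qed
        have a2: "\<sigma> ! k = \<tau> ! (k' - 1)"
        proof -
          have "rev (take k' \<tau>) ! 0 = \<tau> ! (k' - 1)" using split2(4,5) by (simp add: rev_nth)
          moreover have "drop k \<sigma> ! 0 = \<sigma> ! k" using split(4,5) by simp
          ultimately show ?thesis using e2 by simp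
        qed
        have "\<sigma> ! (k - 1) < \<sigma> ! k"
          using mot_lab[OF less.prems(1), of "k - 1"] split(4,5,6) mot_len[OF less.prems(1)] by simp
        moreover have "\<tau> ! (k' - 1) < \<tau> ! k'"
          using mot_lab[OF less.prems(2), of "k' - 1"] split2(4,5,6) mot_len[OF less.prems(2)] by simp
        ultimately show ?thesis using a1 a2 by simp
      qed
    qed
  qed
qed

lemma sum_take_negrev:
  assumes "j \<le> length q"
  shows "sum_list (take j (map uminus (rev q))) = - sum_list q + sum_list (take (length q - j) (q::int list))"
  using sum_take_rev[OF assms] by (simp add: take_map sum_uminus)

lemma mot_join:
  assumes m1: "mot q1 \<tau>1" and m2: "mot q2 \<tau>2" and dj: "set \<tau>1 \<inter> set \<tau>2 = {}"
    and lt: "\<tau>1 ! 0 < \<tau>2 ! 0"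
  defines "p \<equiv> map uminus (rev q1) @ [-1] @ q2" and "\<sigma> \<equiv> rev \<tau>1 @ \<tau>2"
  shows "mot p \<sigma>" "psi p \<sigma> = Node (psi q1 \<tau>1) (psi q2 \<tau>2)"
proof -
  define k where "k = length \<tau>1"
  define P1 where "P1 = map uminus (rev q1)"
  have l1: "length q1 = k - 1" "k \<ge> 2" using m1 unfolding mot_def k_def by auto
  have l2: "length q2 = length \<tau>2 - 1" "length \<tau>2 \<ge> 2" using m2 unfolding mot_def by auto
  have lP1: "length P1 = k - 1" using l1 unfolding P1_def by simp
  have pP: "p = P1 @ [-1] @ q2" unfolding p_def P1_def by simp
  have lp: "length p = k + length \<tau>2 - 1" using lP1 l1 l2 pP by simp
  have ls: "length \<sigma> = k + length \<tau>2" unfolding \<sigma>_def k_def by simp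
  have tot1: "sum_list q1 = -1" and tot2: "sum_list q2 = -1" using m1 m2 unfolding mot_def by auto
  have ps1: "\<And>j. 1 \<le> j \<Longrightarrow> j < length q1 \<Longrightarrow> 0 \<le> sum_list (take j q1)" using m1 unfolding mot_def by auto
  have ps2: "\<And>j. 1 \<le> j \<Longrightarrow> j < length q2 \<Longrightarrow> 0 \<le> sum_list (take j q2)" using m2 unfolding mot_def by auto
  have sP1: "\<And>j. j \<le> k - 1 \<Longrightarrow> sum_list (take j P1) = 1 + sum_list (take (k - 1 - j) q1)"
    unfolding P1_def using sum_take_negrev l1 tot1 by simp
  have pre: "\<And>j. 1 \<le> j \<Longrightarrow> j < k \<Longrightarrow> sum_list (take j p) \<ge> 1"
  proof -
    fix j assume j: "1 \<le> j" "j < k"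
    have "take j p = take j P1" using j lP1 pP by simp
    moreover have "sum_list (take (k - 1 - j) q1) \<ge> 0"
      using ps1[of "k - 1 - j"] j l1 by (cases "k - 1 - j = 0") auto
    ultimately show "sum_list (take j p) \<ge> 1" using sP1[of j] j by simp
  qed
  have sP1all: "sum_list P1 = 1" unfolding P1_def using tot1 by (simp add: sum_uminus)
  have atk: "sum_list (take k p) = 0"
  proof -
    have "take k p = P1 @ [-1]" using pP lP1 l1 by simp
    then show ?thesis using sP1all by simp
  qed
  have post: "\<And>j. k < j \<Longrightarrow> sum_list (take j p) = sum_list (take (j - k) q2)"
  proof -
    fix j assume "k < j"
    then have sj: "Suc j - k = Suc (j - k)" by simp
    have "take j p = P1 @ [-1] @ take (j - k) q2" using pP lP1 l1 \<open>k < j\<close>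
      by (simp add: take_append sj)
    then show "sum_list (take j p) = sum_list (take (j - k) q2)" using sP1all by simp
  qed
  have c6: "\<forall>j. 1 \<le> j \<and> j < length p \<longrightarrow> 0 \<le> sum_list (take j p)"
  proof (intro allI impI)
    fix j assume j: "1 \<le> j \<and> j < length p"
    consider "j < k" | "j = k" | "k < j" by linarith
    then show "0 \<le> sum_list (take j p)"
    proof cases
      case 1 then show ?thesis using pre[of j] j by simp
    next
      case 2 then show ?thesis using atk by simp
    next
      case 3 then show ?thesis using post[of j] ps2[of "j - k"] j lp l2 by simp
    qed
  qed
  have c7: "sum_list p = -1" using pP sP1all tot2 by simp
  have c3: "set p \<subseteq> {-1,0,1}" using m1 m2 unfolding pP P1_def mot_def by auto
  have c4: "distinct \<sigma>" using m1 m2 dj unfolding \<sigma>_def mot_def by auto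
  have c5: "\<forall>i < length p. (p!i = -1 \<longrightarrow> \<sigma>!i < \<sigma>!(Suc i)) \<and> (p!i = 1 \<longrightarrow> \<sigma>!(Suc i) < \<sigma>!i)"
  proof (intro allI impI)
    fix i assume i: "i < length p"
    consider "i < k - 1" | "i = k - 1" | "k \<le> i" by linarith
    then show "(p!i = -1 \<longrightarrow> \<sigma>!i < \<sigma>!(Suc i)) \<and> (p!i = 1 \<longrightarrow> \<sigma>!(Suc i) < \<sigma>!i)"
    proof cases
      case 1
      define j where "j = k - 2 - i"
      have j: "j < length q1" "Suc j = k - 1 - i" using 1 l1 unfolding j_def by auto
      have e1: "p ! i = - q1 ! j" unfolding pP using 1 lP1 l1
        by (simp add: nth_append P1_def rev_nth j_def)
      have ii: "i < length \<tau>1" "Suc i < length \<tau>1" using 1 l1 unfolding k_def by auto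
      have e2: "\<sigma> ! i = \<tau>1 ! Suc j" "\<sigma> ! Suc i = \<tau>1 ! j" unfolding \<sigma>_def using 1 l1 j ii
        by (simp_all add: nth_append rev_nth k_def j_def)
      have "(q1!j = -1 \<longrightarrow> \<tau>1!j < \<tau>1!(Suc j)) \<and> (q1!j = 1 \<longrightarrow> \<tau>1!(Suc j) < \<tau>1!j)"
        using m1 j(1) unfolding mot_def by blast
      then show ?thesis unfolding e1 e2 by auto
    next
      case 2
      have e1: "p ! i = -1" unfolding pP using 2 lP1 by (simp add: nth_append)
      have ii: "i < length \<tau>1" "\<not> Suc i < length \<tau>1" "Suc i - length \<tau>1 = 0" "length \<tau>1 - Suc i = 0"
        using 2 l1 unfolding k_def by auto
      have e2: "\<sigma> ! i = \<tau>1 ! 0" "\<sigma> ! Suc i = \<tau>2 ! 0" unfolding \<sigma>_def using ii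
        by (simp_all add: nth_append rev_nth)
      show ?thesis unfolding e1 e2 using lt by simp
    next
      case 3
      define j where "j = i - k"
      have j: "j < length q2" using 3 i lp l2 unfolding j_def by simp
      have ii: "\<not> i < length P1" "i - length P1 = Suc j" using 3 lP1 l1 unfolding j_def by auto
      have e1: "p ! i = q2 ! j" unfolding pP using ii by (simp add: nth_append)
      have e2: "\<sigma> ! i = \<tau>2 ! j" "\<sigma> ! Suc i = \<tau>2 ! Suc j" unfolding \<sigma>_def using 3 l1
        by (simp_all add: nth_append k_def j_def Suc_diff_le)
      have "(q2!j = -1 \<longrightarrow> \<tau>2!j < \<tau>2!(Suc j)) \<and> (q2!j = 1 \<longrightarrow> \<tau>2!(Suc j) < \<tau>2!j)"
        using m2 j unfolding mot_def by blast
      then show ?thesis unfolding e1 e2 by auto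
    qed
  qed
  have c1: "2 \<le> length \<sigma>" using ls l1 by simp
  have c2: "length p = length \<sigma> - 1" using ls lp by simp
  show mp: "mot p \<sigma>" unfolding mot_def by (intro conjI c1 c2 c3 c4 c5 c6 c7)
  have least: "(LEAST k. k \<ge> 1 \<and> sum_list (take k p) = 0) = k"
  proof (rule Least_equality)
    show "1 \<le> k \<and> sum_list (take k p) = 0" using atk l1 by simp
    fix y assume "1 \<le> y \<and> sum_list (take y p) = 0"
    then show "k \<le> y" using pre[of y] by force
  qed
  have p0: "p ! 0 \<noteq> 0"
  proof -
    have "p \<noteq> []" using pP by simp
    then have "take 1 p = [p ! 0]" by (cases p) auto
    moreover have "sum_list (take 1 p) \<ge> 1" using pre[of 1] l1 by simp
    ultimately show ?thesis by simp
  qed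
  have "psi p \<sigma> = Node (psi (map uminus (rev (take (k - 1) p))) (rev (take k \<sigma>))) (psi (drop k p) (drop k \<sigma>))"
    by (rule psi_split[OF _ p0 least[symmetric]]) (use ls l1 l2 in auto)
  moreover have "take (k - 1) p = P1" "drop k p = q2" "take k \<sigma> = rev \<tau>1" "drop k \<sigma> = \<tau>2"
    using pP lP1 l1 unfolding \<sigma>_def k_def by auto
  ultimately show "psi p \<sigma> = Node (psi q1 \<tau>1) (psi q2 \<tau>2)" unfolding P1_def by (simp add: rev_map)
qed

lemma mot_cons0:
  assumes m: "mot q \<tau>" and a: "a \<notin> set \<tau>"
  shows "mot (0 # q) (a # \<tau>)" "psi (0 # q) (a # \<tau>) = Node (Leaf a) (psi q \<tau>)"
proof -
  have l: "length \<tau> \<ge> 2" "length q = length \<tau> - 1" using m unfolding mot_def by auto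
  have c5: "\<forall>i < length (0 # q). ((0#q)!i = -1 \<longrightarrow> (a#\<tau>)!i < (a#\<tau>)!(Suc i)) \<and> ((0#q)!i = 1 \<longrightarrow> (a#\<tau>)!(Suc i) < (a#\<tau>)!i)"
  proof (intro allI impI)
    fix i assume i: "i < length (0 # q)"
    show "((0#q)!i = -1 \<longrightarrow> (a#\<tau>)!i < (a#\<tau>)!(Suc i)) \<and> ((0#q)!i = 1 \<longrightarrow> (a#\<tau>)!(Suc i) < (a#\<tau>)!i)"
    proof (cases i)
      case 0 then show ?thesis by simp
    next
      case (Suc i')
      then have "i' < length q" using i by simp
      then show ?thesis using m Suc unfolding mot_def by simp
    qed
  qed
  have c6: "\<forall>j. 1 \<le> j \<and> j < length (0 # q) \<longrightarrow> 0 \<le> sum_list (take j (0 # q))"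
  proof (intro allI impI)
    fix j assume j: "1 \<le> j \<and> j < length (0 # q)"
    show "0 \<le> sum_list (take j (0 # q))"
    proof (cases "j = 1")
      case True then show ?thesis by simp
    next
      case False
      then obtain j' where "j = Suc j'" "1 \<le> j'" "j' < length q" using j by (cases j) auto
      then show ?thesis using m unfolding mot_def by simp
    qed
  qed
  show "mot (0 # q) (a # \<tau>)" unfolding mot_def using m a l c5 c6 unfolding mot_def by auto
  show "psi (0 # q) (a # \<tau>) = Node (Leaf a) (psi q \<tau>)"
    using psi_zero[of "a # \<tau>" "0 # q"] l by simp
qed

lemma mot_two: "a < b \<Longrightarrow> mot [-1] [a, b]"
  unfolding mot_def by (auto simp: less_Suc_eq)

lemma len_leaves_ge2: "length (leaves t) \<ge> 2 \<Longrightarrow> \<exists>x y. t = Node x y"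
  by (cases t) auto

lemma leaves_ne: "leaves t \<noteq> []"
  by (induct t) auto

lemma psi_surj: "distinct (leaves t) \<Longrightarrow> length (leaves t) \<ge> 2 \<Longrightarrow>
  \<exists>p \<sigma>. mot p \<sigma> \<and> mset \<sigma> = mset (leaves t) \<and> teq (psi p \<sigma>) t"
proof (induction t)
  case (Leaf x) then show ?case by simp
next
  case (Node A B)
  have dA: "distinct (leaves A)" and dB: "distinct (leaves B)" and dj: "set (leaves A) \<inter> set (leaves B) = {}"
    using Node.prems by auto
  show ?case
  proof (cases A)
    case (Leaf a)
    show ?thesis
    proof (cases B)
      case (Leaf b)
      then have "a \<noteq> b" using \<open>A = Leaf a\<close> Node.prems by auto
      then show ?thesis
      proof (cases "a < b")
        case True
        have "psi [-1] [a, b] = Node (Leaf a) (Leaf b)" by (simp add: psi_base)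
        then show ?thesis using mot_two[OF True] \<open>A = Leaf a\<close> \<open>B = Leaf b\<close> teq_refl by fastforce
      next
        case False
        then have "b < a" using \<open>a \<noteq> b\<close> by simp
        have "psi [-1] [b, a] = Node (Leaf b) (Leaf a)" by (simp add: psi_base)
        moreover have "teq (Node (Leaf b) (Leaf a)) (Node (Leaf a) (Leaf b))" by (auto intro: teq.intros)
        moreover have "mset [b, a] = mset (leaves (Node A B))" using \<open>A = Leaf a\<close> \<open>B = Leaf b\<close> by simp
        ultimately show ?thesis using mot_two[OF \<open>b < a\<close>] \<open>A = Leaf a\<close> \<open>B = Leaf b\<close> by metis
      qed
    next
      case (Node x y)
      then have "length (leaves B) \<ge> 2" using leaves_Node_len by simp
      then obtain q \<tau> where h: "mot q \<tau>" "mset \<tau> = mset (leaves B)" "teq (psi q \<tau>) B"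
        using Node.IH(2) dB by blast
      have "a \<notin> set \<tau>" using dj \<open>A = Leaf a\<close> h(2) by (metis disjoint_iff leaves.simps(1) list.set_intros(1) set_mset_mset)
      note c = mot_cons0[OF h(1) this]
      have "teq (psi (0 # q) (a # \<tau>)) (Node A B)" unfolding c(2) using h(3) \<open>A = Leaf a\<close>
        by (auto intro: teq.intros)
      moreover have "mset (a # \<tau>) = mset (leaves (Node A B))" using h(2) \<open>A = Leaf a\<close> by simp
      ultimately show ?thesis using c(1) by blast
    qed
  next
    case (Node x y)
    then have "length (leaves A) \<ge> 2" using leaves_Node_len by simp
    then obtain q1 \<tau>1 where h1: "mot q1 \<tau>1" "mset \<tau>1 = mset (leaves A)" "teq (psi q1 \<tau>1) A"
      using Node.IH(1) dA by blast
    show ?thesis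
    proof (cases B)
      case (Leaf b)
      have "b \<notin> set \<tau>1" using dj \<open>B = Leaf b\<close> h1(2) by (metis disjoint_iff leaves.simps(1) list.set_intros(1) set_mset_mset)
      note c = mot_cons0[OF h1(1) this]
      have "teq (psi (0 # q1) (b # \<tau>1)) (Node A B)" unfolding c(2) using h1(3) \<open>B = Leaf b\<close>
        by (auto intro: teq.intros)
      moreover have "mset (b # \<tau>1) = mset (leaves (Node A B))" using h1(2) \<open>B = Leaf b\<close> by simp
      ultimately show ?thesis using c(1) by blast
    next
      case (Node u v)
      then have "length (leaves B) \<ge> 2" using leaves_Node_len by simp
      then obtain q2 \<tau>2 where h2: "mot q2 \<tau>2" "mset \<tau>2 = mset (leaves B)" "teq (psi q2 \<tau>2) B"
        using Node.IH(2) dB by blast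
      have dj2: "set \<tau>1 \<inter> set \<tau>2 = {}" using dj h1(2) h2(2) by (metis set_mset_mset)
      have ne: "\<tau>1 \<noteq> []" "\<tau>2 \<noteq> []" using h1(1) h2(1) unfolding mot_def by auto
      then have "\<tau>1 ! 0 \<in> set \<tau>1" "\<tau>2 ! 0 \<in> set \<tau>2" by auto
      then have "\<tau>1 ! 0 \<noteq> \<tau>2 ! 0" using dj2 by auto
      then consider "\<tau>1 ! 0 < \<tau>2 ! 0" | "\<tau>2 ! 0 < \<tau>1 ! 0" by linarith
      then show ?thesis
      proof cases
        case 1
        note c = mot_join[OF h1(1) h2(1) dj2 1]
        have "teq (Node (psi q1 \<tau>1) (psi q2 \<tau>2)) (Node A B)" using h1(3) h2(3) by (auto intro: teq.intros)
        moreover have "mset (rev \<tau>1 @ \<tau>2) = mset (leaves (Node A B))" using h1(2) h2(2) by simp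
        ultimately show ?thesis using c by metis
      next
        case 2
        have dj3: "set \<tau>2 \<inter> set \<tau>1 = {}" using dj2 by blast
        note c = mot_join[OF h2(1) h1(1) dj3 2]
        have "teq (Node (psi q2 \<tau>2) (psi q1 \<tau>1)) (Node A B)" using h1(3) h2(3) by (auto intro: teq.intros)
        moreover have "mset (rev \<tau>2 @ \<tau>1) = mset (leaves (Node A B))" using h1(2) h2(2) by (simp add: add.commute)
        ultimately show ?thesis using c by metis
      qed
    qed
  qed
qed

theorem theorem1:
  fixes n :: nat
  assumes "n > 1"
  shows "bij_betw (\<lambda>w. teq_rel `` {Phi w}) (motzkin_paths n) (labelled_trees n // teq_rel)"
proof -
  have eq: "equiv UNIV teq_rel" by (rule equiv_teq)
  have Pw: "\<And>w. w \<in> motzkin_paths n \<Longrightarrow> Phi w = psi (fst w) (snd w) \<and> mot (fst w) (snd w) \<and> set (snd w) = {1..n}"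
    using Phi_psi[OF assms] motzkin_iff[OF assms] unfolding motzkin_paths_def by auto
  have inj: "inj_on (\<lambda>w. teq_rel `` {Phi w}) (motzkin_paths n)"
  proof (rule inj_onI)
    fix w1 w2 assume w: "w1 \<in> motzkin_paths n" "w2 \<in> motzkin_paths n"
      and e: "teq_rel `` {Phi w1} = teq_rel `` {Phi w2}"
    have "(Phi w1, Phi w2) \<in> teq_rel" using e eq_equiv_class_iff[OF eq] by blast
    then have "teq (psi (fst w1) (snd w1)) (psi (fst w2) (snd w2))" using Pw[OF w(1)] Pw[OF w(2)]
      unfolding teq_rel_def by simp
    then have "fst w1 = fst w2 \<and> snd w1 = snd w2" using psi_inj Pw[OF w(1)] Pw[OF w(2)] by blast
    then show "w1 = w2" by (simp add: prod_eq_iff)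
  qed
  have sub: "(\<lambda>w. teq_rel `` {Phi w}) ` motzkin_paths n \<subseteq> labelled_trees n // teq_rel"
  proof
    fix X assume "X \<in> (\<lambda>w. teq_rel `` {Phi w}) ` motzkin_paths n"
    then obtain w where w: "w \<in> motzkin_paths n" "X = teq_rel `` {Phi w}" by blast
    note h = Pw[OF w(1)]
    have ms: "mset (leaves (Phi w)) = mset (snd w)" using psi_mset h by simp
    have "distinct (snd w)" using h unfolding mot_def by simp
    then have "distinct (leaves (Phi w))" using mset_eq_imp_distinct_iff[OF ms] by simp
    moreover have "set (leaves (Phi w)) = {1..n}" using ms h by (metis set_mset_mset)
    ultimately have "Phi w \<in> labelled_trees n" unfolding labelled_trees_def by simp
    then have "teq_rel `` {Phi w} \<in> labelled_trees n // teq_rel" by (rule quotientI)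
    then show "X \<in> labelled_trees n // teq_rel" using w(2) by simp
  qed
  have sup: "labelled_trees n // teq_rel \<subseteq> (\<lambda>w. teq_rel `` {Phi w}) ` motzkin_paths n"
  proof
    fix X assume "X \<in> labelled_trees n // teq_rel"
    then obtain t where t: "t \<in> labelled_trees n" "X = teq_rel `` {t}" by (auto elim: quotientE)
    have dt: "distinct (leaves t)" "set (leaves t) = {1..n}" using t(1) unfolding labelled_trees_def by auto
    then have "length (leaves t) = n" using distinct_card by fastforce
    then have "length (leaves t) \<ge> 2" using assms by simp
    then obtain p \<sigma> where ps: "mot p \<sigma>" "mset \<sigma> = mset (leaves t)" "teq (psi p \<sigma>) t"
      using psi_surj dt by blast
    have "set \<sigma> = {1..n}" using ps(2) dt by (metis set_mset_mset)
    then have mp: "(p, \<sigma>) \<in> motzkin_paths n" using motzkin_iff[OF assms] ps unfolding motzkin_paths_def by simp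
    have "Phi (p, \<sigma>) = psi p \<sigma>" using Pw[OF mp] by simp
    then have "teq_rel `` {Phi (p, \<sigma>)} = teq_rel `` {t}"
      using equiv_class_eq[OF eq] ps(3) unfolding teq_rel_def by simp
    then show "X \<in> (\<lambda>w. teq_rel `` {Phi w}) ` motzkin_paths n" using mp t(2) by force
  qed
  show ?thesis unfolding bij_betw_def using inj sub sup by blast
qed

end
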